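(* Let $A=A^T\in\mathbb{R}^{n\times n}$, let $s$ be an integer with $1\leq s<d(A)$, and let $v_0\in\mathbb{R}^n$ with $\|v_0\|=1$ and $d(A,v_0)=s+1$. Consider the iteration $\widetilde v_{k+1}=P_s(A;v_k)v_k$, $v_{k+1}=\widetilde v_{k+1}/\|\widetilde v_{k+1}\|$, $k=0,1,2,\dots$. Then $v_0=v_2=v_4=\cdots$.
   Context: $d(A)$ is the degree of the minimal polynomial of $A$; $d(A,v)$ is the grade of $v$ w.r.t. $A$ (degree of the monic polynomial $p$ of smallest degree with $p(A)v=0$); $\mathcal{K}_k(A,v)=\mathrm{span}\{v,Av,\dots,A^{k-1}v\}$; $\mathcal{M}_s$ is the set of real monic polynomials of degree $s$; $\|\cdot\|$ is the Euclidean norm. For $v$ with $d(A,v)\geq s$, $P_s(\cdot\,;v)\in\mathcal{M}_s$ denotes the unique monic polynomial of degree $s$ such that $P_s(A;v)v\perp\mathcal{K}_s(A,v)$. (Under the hypotheses all $\widetilde v_k$ are nonzero.) *)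

theory Defs
  imports "HOL-Analysis.Analysis" "HOL-Computational_Algebra.Polynomial"
begin

definition mat_pow :: "real^'n^'n \<Rightarrow> nat \<Rightarrow> real^'n^'n" where
  "mat_pow A i = (((**) A) ^^ i) (mat 1)"

definition poly_mat :: "real poly \<Rightarrow> real^'n^'n \<Rightarrow> real^'n^'n" where
  "poly_mat p A = (\<Sum>i\<le>degree p. coeff p i *\<^sub>R mat_pow A i)"

definition monic_deg :: "nat \<Rightarrow> real poly set" where
  "monic_deg s = {p. degree p = s \<and> lead_coeff p = 1}"

definition minpoly_deg :: "real^'n^'n \<Rightarrow> nat" where
  "minpoly_deg A = (LEAST k. \<exists>p\<in>monic_deg k. poly_mat p A = 0)"

definition grade :: "real^'n^'n \<Rightarrow> real^'n \<Rightarrow> nat" where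
  "grade A v = (LEAST k. \<exists>p\<in>monic_deg k. poly_mat p A *v v = 0)"

definition krylov :: "nat \<Rightarrow> real^'n^'n \<Rightarrow> real^'n \<Rightarrow> (real^'n) set" where
  "krylov k A v = span {mat_pow A i *v v | i. i < k}"

definition P_poly :: "nat \<Rightarrow> real^'n^'n \<Rightarrow> real^'n \<Rightarrow> real poly" where
  "P_poly s A v = (THE p. p \<in> monic_deg s \<and>
      (\<forall>w\<in>krylov s A v. (poly_mat p A *v v) \<bullet> w = 0))"

primrec iter_v :: "real^'n^'n \<Rightarrow> nat \<Rightarrow> real^'n \<Rightarrow> nat \<Rightarrow> real^'n" where
  "iter_v A s v0 0 = v0"
| "iter_v A s v0 (Suc k) =
     (let vk = iter_v A s v0 k; w = poly_mat (P_poly s A vk) A *v vk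
      in (1 / norm w) *\<^sub>R w)"

end

theory Submission
  imports Defs
begin

lemma mp_0: "mat_pow A 0 = mat 1" by (simp add: mat_pow_def)
lemma mp_Suc: "mat_pow A (Suc i) = A ** mat_pow A i" by (simp add: mat_pow_def)
lemma mpv_0[simp]: "mat_pow A 0 *v x = x" by (simp add: mp_0)
lemma mpv_Suc: "mat_pow A (Suc i) *v x = A *v (mat_pow A i *v x)"
  by (simp add: mp_Suc matrix_vector_mul_assoc)
lemma mpv_add: "mat_pow A (i + j) *v x = mat_pow A i *v (mat_pow A j *v x)"
  by (induction i) (simp_all add: mpv_Suc)
lemma mpv_1: "mat_pow A (Suc 0) *v x = A *v x"
  using mpv_Suc[of A 0 x] by simp

lemma mpv_sym:
  assumes "transpose A = A"
  shows "(mat_pow A i *v x) \<bullet> y = x \<bullet> (mat_pow A i *v y)"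
proof (induction i arbitrary: x y)
  case 0 then show ?case by simp
next
  case (Suc i)
  have "(mat_pow A (Suc i) *v x) \<bullet> y = (A *v (mat_pow A i *v x)) \<bullet> y" by (simp add: mpv_Suc)
  also have "\<dots> = (mat_pow A i *v x) \<bullet> (A *v y)"
    by (metis assms dot_lmul_matrix transpose_matrix_vector)
  also have "\<dots> = x \<bullet> (mat_pow A i *v (A *v y))" by (rule Suc)
  also have "\<dots> = x \<bullet> (mat_pow A (Suc i) *v y)"
    using mpv_add[of A i 1 y] by (simp add: mpv_1)
  finally show ?case .
qed

lemma mpv_scale: "mat_pow A i *v (c *\<^sub>R x) = c *\<^sub>R (mat_pow A i *v x)"
  by (simp add: matrix_vector_mult_scaleR)

lemma mpv_sum: "mat_pow A i *v (\<Sum>j\<in>S. g j) = (\<Sum>j\<in>S. mat_pow A i *v g j)"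
  by (simp add: vec.sum)

lemma sum_mat_vec: "finite S \<Longrightarrow> (sum f S) *v (x::real^'n) = (\<Sum>i\<in>S. f i *v x)"
  by (induction S rule: finite_induct) (simp_all add: matrix_vector_mult_add_rdistrib)

lemma poly_vec:
  assumes "degree p \<le> N"
  shows "poly_mat p A *v x = (\<Sum>i\<le>N. coeff p i *\<^sub>R (mat_pow A i *v x))"
proof -
  have "poly_mat p A *v x = (\<Sum>i\<le>degree p. coeff p i *\<^sub>R (mat_pow A i *v x))"
    by (simp add: poly_mat_def sum_mat_vec scaleR_matrix_vector_assoc)
  also have "\<dots> = (\<Sum>i\<le>N. coeff p i *\<^sub>R (mat_pow A i *v x))"
    by (rule sum.mono_neutral_left) (use assms in \<open>auto simp: coeff_eq_0\<close>)
  finally show ?thesis .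
qed

definition kill :: "real^'n^'n \<Rightarrow> real^'n \<Rightarrow> nat \<Rightarrow> bool" where
  "kill A v k \<longleftrightarrow> (\<exists>c. c k = 1 \<and> (\<Sum>i\<le>k. c i *\<^sub>R (mat_pow A i *v v)) = 0)"

lemma mkpoly:
  fixes c :: "nat \<Rightarrow> real"
  assumes "c k = 1"
  shows "\<exists>p\<in>monic_deg k. \<forall>x. poly_mat p A *v x = (\<Sum>i\<le>k. c i *\<^sub>R (mat_pow A i *v x))"
proof -
  define p where "p = (\<Sum>i\<le>k. monom (c i) i)"
  have cf: "coeff p j = (if j \<le> k then c j else 0)" for j
    unfolding p_def coeff_sum coeff_monom by (simp add: sum.delta)
  have dle: "degree p \<le> k" by (rule degree_le) (auto simp: cf)
  have dge: "k \<le> degree p" by (rule le_degree) (simp add: cf assms)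
  have dp: "degree p = k" using dle dge by simp
  have "p \<in> monic_deg k" using dp cf assms by (simp add: monic_deg_def)
  moreover have "poly_mat p A *v x = (\<Sum>i\<le>k. c i *\<^sub>R (mat_pow A i *v x))" for x
    using poly_vec[OF dle, of A x] by (simp add: cf)
  ultimately show ?thesis by blast
qed

lemma kill_iff: "kill A v k \<longleftrightarrow> (\<exists>p\<in>monic_deg k. poly_mat p A *v v = 0)"
proof
  assume "kill A v k"
  then obtain c where c: "c k = 1" "(\<Sum>i\<le>k. c i *\<^sub>R (mat_pow A i *v v)) = 0"
    by (auto simp: kill_def)
  from mkpoly[of c k A, OF c(1)] c(2) show "\<exists>p\<in>monic_deg k. poly_mat p A *v v = 0" by metis
next
  assume "\<exists>p\<in>monic_deg k. poly_mat p A *v v = 0"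
  then obtain p where p: "degree p = k" "lead_coeff p = 1" "poly_mat p A *v v = 0"
    by (auto simp: monic_deg_def)
  then show "kill A v k" unfolding kill_def
    using poly_vec[of p k A v] by (intro exI[of _ "coeff p"]) auto
qed

lemma max_lemma:
  fixes e :: "nat \<Rightarrow> real" and g :: "nat \<Rightarrow> 'a::real_vector"
  assumes "(\<Sum>i<N. e i *\<^sub>R g i) = 0" "i0 < N" "e i0 \<noteq> 0"
  shows "\<exists>m<N. \<exists>c. c m = 1 \<and> (\<Sum>i\<le>m. c i *\<^sub>R g i) = 0"
proof -
  define S where "S = {i. i < N \<and> e i \<noteq> 0}"
  define m where "m = Max S"
  have fS: "finite S" unfolding S_def by auto
  have "i0 \<in> S" using assms unfolding S_def by auto
  then have mS: "m \<in> S" and mmax: "\<And>i. i \<in> S \<Longrightarrow> i \<le> m"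
    using fS unfolding m_def by (auto intro: Max_in)
  have mN: "m < N" and em: "e m \<noteq> 0" using mS unfolding S_def by auto
  have "(\<Sum>i\<le>m. e i *\<^sub>R g i) = (\<Sum>i<N. e i *\<^sub>R g i)"
  proof (rule sum.mono_neutral_left)
    show "\<forall>i\<in>{..<N} - {..m}. e i *\<^sub>R g i = 0"
      using mmax unfolding S_def by force
  qed (use mN in auto)
  also have "\<dots> = 0" by (rule assms(1))
  finally have z: "(\<Sum>i\<le>m. e i *\<^sub>R g i) = 0" .
  have "(\<Sum>i\<le>m. (e i / e m) *\<^sub>R g i) = (1 / e m) *\<^sub>R (\<Sum>i\<le>m. e i *\<^sub>R g i)"
    by (simp add: scaleR_sum_right)
  also have "\<dots> = 0" using z by simp
  finally show ?thesis using mN em by (intro exI[of _ m] conjI exI[of _ "\<lambda>i. e i / e m"]) auto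
qed

lemma span_rep:
  fixes g :: "nat \<Rightarrow> 'a::real_vector"
  assumes "x \<in> span (g ` I)" "finite I"
  shows "\<exists>c. x = (\<Sum>i\<in>I. c i *\<^sub>R g i)"
  using assms(1)
proof (induction rule: span_induct_alt)
  case base
  then show ?case by (intro exI[of _ "\<lambda>_. 0"]) simp
next
  case (step a x y)
  then obtain i0 c where i0: "i0 \<in> I" "x = g i0" and c: "y = (\<Sum>i\<in>I. c i *\<^sub>R g i)" by auto
  define d where "d i = (if i = i0 then a else 0)" for i
  have "(\<Sum>i\<in>I. (c i + d i) *\<^sub>R g i)
      = (\<Sum>i\<in>I. c i *\<^sub>R g i) + (\<Sum>i\<in>I. d i *\<^sub>R g i)"
    by (simp add: scaleR_add_left sum.distrib)
  also have "(\<Sum>i\<in>I. d i *\<^sub>R g i) = (\<Sum>i\<in>I. (if i = i0 then a *\<^sub>R g i else 0))"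
    by (rule sum.cong) (auto simp: d_def)
  also have "\<dots> = a *\<^sub>R x" using i0 assms(2) by (simp add: sum.delta)
  finally have "(\<Sum>i\<in>I. (c i + d i) *\<^sub>R g i) = y + a *\<^sub>R x" using c by simp
  then show ?case by (intro exI[of _ "\<lambda>i. c i + d i"]) (simp add: add.commute)
qed

lemma krylov_eq: "krylov s A v = span ((\<lambda>i. mat_pow A i *v v) ` {..<s})"
proof -
  have "{mat_pow A i *v v | i. i < s} = (\<lambda>i. mat_pow A i *v v) ` {..<s}" by auto
  then show ?thesis by (simp add: krylov_def)
qed

lemma orth_krylov:
  "(\<forall>w\<in>krylov s A v. z \<bullet> w = 0) \<longleftrightarrow> (\<forall>j<s. z \<bullet> (mat_pow A j *v v) = 0)"
proof
  assume "\<forall>w\<in>krylov s A v. z \<bullet> w = 0"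
  then show "\<forall>j<s. z \<bullet> (mat_pow A j *v v) = 0"
    unfolding krylov_eq by (auto intro: span_base)
next
  assume h: "\<forall>j<s. z \<bullet> (mat_pow A j *v v) = 0"
  show "\<forall>w\<in>krylov s A v. z \<bullet> w = 0"
  proof
    fix w assume "w \<in> krylov s A v"
    then have "orthogonal z w" unfolding krylov_eq
      by (rule orthogonal_to_span) (use h in \<open>auto simp: orthogonal_def\<close>)
    then show "z \<bullet> w = 0" by (simp add: orthogonal_def)
  qed
qed

lemma P_char:
  assumes nk: "\<forall>k<s. \<not> kill A v k"
  shows "P_poly s A v \<in> monic_deg s \<and>
    (\<forall>j<s. (poly_mat (P_poly s A v) A *v v) \<bullet> (mat_pow A j *v v) = 0)"
proof -
  define F where "F i = mat_pow A i *v v" for i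
  define Q where "Q p \<longleftrightarrow> p \<in> monic_deg s \<and> (\<forall>w\<in>krylov s A v. (poly_mat p A *v v) \<bullet> w = 0)" for p
  have Q_alt: "Q p \<longleftrightarrow> p \<in> monic_deg s \<and> (\<forall>j<s. (poly_mat p A *v v) \<bullet> F j = 0)" for p
    unfolding Q_def F_def orth_krylov ..
  have ex: "\<exists>p. Q p"
  proof -
    obtain y z where y: "y \<in> span (F ` {..<s})"
      and z: "\<And>w. w \<in> span (F ` {..<s}) \<Longrightarrow> orthogonal z w" and yz: "F s = y + z"
      using orthogonal_subspace_decomp_exists[of "F ` {..<s}" "F s"] by blast
    obtain c where c: "y = (\<Sum>i<s. c i *\<^sub>R F i)" using span_rep[OF y] by auto
    define d where "d i = (if i = s then 1 else - c i)" for i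
    have "(\<Sum>i\<le>s. d i *\<^sub>R F i) = F s - (\<Sum>i<s. c i *\<^sub>R F i)"
      unfolding lessThan_Suc_atMost[symmetric] by (simp add: d_def sum_negf)
    also have "\<dots> = z" using yz c by simp
    finally have dz: "(\<Sum>i\<le>s. d i *\<^sub>R F i) = z" .
    obtain p where p: "p \<in> monic_deg s" and pv: "poly_mat p A *v v = (\<Sum>i\<le>s. d i *\<^sub>R F i)"
      using mkpoly[of d s A] unfolding F_def d_def by auto
    have "(poly_mat p A *v v) \<bullet> F j = 0" if "j < s" for j
      using z[of "F j"] that dz pv by (auto simp: orthogonal_def intro: span_base)
    then show ?thesis using p unfolding Q_alt by blast
  qed
  have uniq: "p = p'" if "Q p" "Q p'" for p p'
  proof -
    have p: "degree p = s" "coeff p s = 1" and p': "degree p' = s" "coeff p' s = 1"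
      using that unfolding Q_alt monic_deg_def by auto
    define e where "e i = coeff p i - coeff p' i" for i
    define \<delta> where "\<delta> = poly_mat p A *v v - poly_mat p' A *v v"
    have "\<delta> = (\<Sum>i\<le>s. e i *\<^sub>R F i)"
      unfolding \<delta>_def poly_vec[OF eq_imp_le[OF p(1)]] poly_vec[OF eq_imp_le[OF p'(1)]]
      by (simp add: e_def F_def scaleR_diff_left sum_subtractf)
    also have "\<dots> = (\<Sum>i<s. e i *\<^sub>R F i)"
      unfolding lessThan_Suc_atMost[symmetric] using p p' by (simp add: e_def)
    finally have de: "\<delta> = (\<Sum>i<s. e i *\<^sub>R F i)" .
    have dF: "\<delta> \<bullet> F j = 0" if "j < s" for j
      using that \<open>Q p\<close> \<open>Q p'\<close> unfolding Q_alt \<delta>_def by (simp add: inner_diff_left)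
    have "\<delta> \<bullet> \<delta> = (\<Sum>i<s. e i * (\<delta> \<bullet> F i))"
      by (subst (2) de) (simp add: inner_sum_right)
    also have "\<dots> = 0" using dF by simp
    finally have d0: "\<delta> = 0" by simp
    have e0: "e i = 0" if "i < s" for i
    proof (rule ccontr)
      assume "e i \<noteq> 0"
      from max_lemma[of e F s i] this that d0 de obtain m c where
        "m < s" "c m = 1" "(\<Sum>i\<le>m. c i *\<^sub>R F i) = 0" by auto
      then have "kill A v m" unfolding kill_def F_def by auto
      with nk \<open>m < s\<close> show False by auto
    qed
    show "p = p'"
    proof (rule poly_eqI)
      fix i
      show "coeff p i = coeff p' i"
      proof (cases "i < s")
        case True then show ?thesis using e0[OF True] by (simp add: e_def)
      next
        case False
        then have "i = s \<or> i > s" by auto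
        then show ?thesis using p p' by (auto simp: coeff_eq_0)
      qed
    qed
  qed
  have "Q (P_poly s A v)"
    unfolding P_poly_def Q_def[symmetric] using ex uniq by (metis theI)
  then show ?thesis unfolding Q_alt F_def by blast
qed

lemma annih: "\<exists>k. kill A (v::real^'n) k"
proof -
  define N where "N = CARD('n)"
  define F where "F i = mat_pow A i *v v" for i
  show ?thesis
  proof (cases "inj_on F {..N}")
    case False
    then obtain i j where ij: "i \<noteq> j" "F i = F j" "i \<le> N" "j \<le> N"
      unfolding inj_on_def by auto
    obtain a b where ab: "a < b" "F a = F b"
      using ij by (metis linorder_neqE_nat)
    define c where "c t = (if t = b then 1 else 0) - (if t = a then 1 else (0::real))" for t
    have "(\<Sum>t\<le>b. c t *\<^sub>R F t) = (\<Sum>t\<le>b. (if t = b then F t else 0)) - (\<Sum>t\<le>b. (if t = a then F t else 0))"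
      unfolding sum_subtractf[symmetric] by (rule sum.cong) (auto simp: c_def)
    also have "\<dots> = 0" using ab by (simp add: sum.delta)
    finally have "kill A v b" unfolding kill_def F_def
      using ab by (intro exI[of _ c]) (simp add: c_def)
    then show ?thesis by blast
  next
    case True
    have card: "card (F ` {..N}) = Suc N" using True by (simp add: card_image)
    have "\<not> independent (F ` {..N})"
    proof
      assume "independent (F ` {..N})"
      then have "card (F ` {..N}) \<le> DIM(real^'n)" by (rule independent_card_le)
      then show False using card by (simp add: N_def)
    qed
    then obtain u where u: "\<exists>x\<in>F ` {..N}. u x \<noteq> 0" "(\<Sum>x\<in>F ` {..N}. u x *\<^sub>R x) = 0"
      using dependent_finite[of "F ` {..N}"] by auto
    obtain i0 where i0: "i0 \<le> N" "u (F i0) \<noteq> 0" using u(1) by auto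
    have "(\<Sum>i\<le>N. u (F i) *\<^sub>R F i) = 0"
      using u(2) sum.reindex[OF True, of "\<lambda>x. u x *\<^sub>R x"] by simp
    then have "(\<Sum>i<Suc N. u (F i) *\<^sub>R F i) = 0" by (simp add: lessThan_Suc_atMost)
    from max_lemma[of "\<lambda>i. u (F i)" F "Suc N" i0, OF this] i0
    obtain m c where "c m = 1" "(\<Sum>i\<le>m. c i *\<^sub>R F i) = 0" by auto
    then have "kill A v m" unfolding kill_def F_def by auto
    then show ?thesis by blast
  qed
qed

lemma grade_facts:
  assumes "grade A v = s + 1"
  shows "kill A v (s+1)" "\<And>k. k \<le> s \<Longrightarrow> \<not> kill A v k"
proof -
  have g: "grade A v = (LEAST k. kill A v k)"
    unfolding grade_def kill_iff ..
  show "kill A v (s+1)" using LeastI_ex[OF annih[of A v]] g assms by simp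
  show "\<not> kill A v k" if "k \<le> s" for k
    using not_less_Least[of k "kill A v"] g assms that by simp
qed

definition stp :: "real^'n^'n \<Rightarrow> nat \<Rightarrow> real^'n \<Rightarrow> real^'n" where
  "stp A s x = (let w = poly_mat (P_poly s A x) A *v x in (1 / norm w) *\<^sub>R w)"

lemma iter_Suc: "iter_v A s v0 (Suc n) = stp A s (iter_v A s v0 n)"
  by (simp add: stp_def Let_def)

lemma step_step:
  assumes sym: "transpose A = A" and nv: "norm v = 1" and gr: "grade A v = s + 1"
  shows "stp A s (stp A s v) = v"
proof -
  define F where "F i = mat_pow A i *v v" for i
  have good: "\<And>k. k \<le> s \<Longrightarrow> \<not> kill A v k" using grade_facts(2)[OF gr] .
  have gk: "kill A v (s+1)" using grade_facts(1)[OF gr] .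
  define V where "V = span (F ` {..s})"
  have FsV: "F (Suc s) \<in> V"
  proof -
    obtain c where c: "c (s+1) = 1" "(\<Sum>i\<le>s+1. c i *\<^sub>R F i) = 0"
      using gk unfolding kill_def F_def by auto
    then have "F (Suc s) + (\<Sum>i\<le>s. c i *\<^sub>R F i) = 0"
      by (simp add: add.commute)
    then have "F (Suc s) = - (\<Sum>i\<le>s. c i *\<^sub>R F i)" by (simp add: eq_neg_iff_add_eq_0)
    also have "\<dots> \<in> V" unfolding V_def
      by (intro span_neg span_sum span_scale span_base) auto
    finally show ?thesis .
  qed
  have invA: "A *v x \<in> V" if xV: "x \<in> V" for x
  proof -
    obtain c where c: "x = (\<Sum>i\<le>s. c i *\<^sub>R F i)" using span_rep[of x F "{..s}"] xV unfolding V_def by auto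
    have "A *v x = (\<Sum>i\<le>s. c i *\<^sub>R F (Suc i))"
      by (simp add: c vec.sum matrix_vector_mult_scaleR F_def mpv_Suc)
    also have "\<dots> \<in> V" unfolding V_def
    proof (rule span_sum)
      fix i assume "i \<in> {..s}"
      then have "F (Suc i) \<in> V"
        using FsV unfolding V_def by (cases "i = s") (auto intro: span_base)
      then show "c i *\<^sub>R F (Suc i) \<in> span (F ` {..s})" unfolding V_def by (rule span_scale)
    qed
    finally show ?thesis .
  qed
  have invM: "mat_pow A j *v x \<in> V" if "x \<in> V" for x j
    using that by (induction j) (simp_all add: mpv_Suc invA)
  have "F 0 \<in> V" unfolding V_def by (rule span_base) auto
  then have vV: "v \<in> V" by (simp add: F_def)
  have FV: "F i \<in> V" for i using invM[OF vV] by (simp add: F_def)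
  define q where "q = P_poly s A v"
  define u where "u = poly_mat q A *v v"
  have Pq: "q \<in> monic_deg s" "\<And>j. j < s \<Longrightarrow> u \<bullet> F j = 0"
    using P_char[of s A v] good unfolding q_def u_def F_def by auto
  have dq: "degree q = s" "coeff q s = 1" using Pq(1) by (auto simp: monic_deg_def)
  have ue: "u = (\<Sum>i\<le>s. coeff q i *\<^sub>R F i)"
    unfolding u_def F_def by (rule poly_vec) (simp add: dq)
  have "u \<bullet> u = (\<Sum>i\<le>s. coeff q i * (u \<bullet> F i))"
    by (subst (2) ue) (simp add: inner_sum_right)
  also have "\<dots> = u \<bullet> F s"
    unfolding lessThan_Suc_atMost[symmetric] using Pq(2) dq by simp
  finally have uu: "u \<bullet> u = u \<bullet> F s" .
  have u0: "u \<noteq> 0"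
  proof
    assume "u = 0"
    then have "kill A v s" unfolding kill_iff using Pq(1) u_def by force
    with good show False by auto
  qed
  have uFs: "u \<bullet> F s > 0" using uu u0 by (metis inner_gt_zero_iff)
  define nu where "nu = norm u"
  have nu: "nu > 0" using u0 nu_def by simp
  define v1 where "v1 = (1 / nu) *\<^sub>R u"
  have st1: "stp A s v = v1" unfolding stp_def v1_def nu_def u_def q_def by (simp add: Let_def)
  define h where "h j = F j \<bullet> v1" for j
  have h0: "h j = 0" if "j < s" for j
    using Pq(2)[OF that] by (simp add: h_def v1_def inner_commute)
  have hs: "h s > 0" using uFs nu by (simp add: h_def v1_def inner_commute)
  have vM: "v \<bullet> (mat_pow A j *v v1) = h j" for j
    using mpv_sym[OF sym, of j v v1] by (simp add: h_def F_def)
  have v1V: "v1 \<in> V" unfolding v1_def ue V_def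
    by (intro span_scale span_sum span_base) auto
  have D: "\<not> kill A v1 k" if "k \<le> s" for k
  proof
    assume "kill A v1 k"
    then obtain c where c: "c k = 1" "(\<Sum>i\<le>k. c i *\<^sub>R (mat_pow A i *v v1)) = 0"
      unfolding kill_def by auto
    have "0 = v \<bullet> (mat_pow A (s - k) *v (\<Sum>i\<le>k. c i *\<^sub>R (mat_pow A i *v v1)))"
      using c(2) by simp
    also have "\<dots> = (\<Sum>i\<le>k. c i * h (s - k + i))"
      by (simp add: vec.sum matrix_vector_mult_scaleR inner_sum_right mpv_add[symmetric] vM)
    also have "\<dots> = c k * h s + (\<Sum>i<k. c i * h (s - k + i))"
      unfolding lessThan_Suc_atMost[symmetric] using that by simp
    also have "(\<Sum>i<k. c i * h (s - k + i)) = 0"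
      using that by (intro sum.neutral) (auto intro!: h0)
    finally show False using c(1) hs by simp
  qed
  define r where "r = P_poly s A v1"
  define w where "w = poly_mat r A *v v1"
  have Pr: "r \<in> monic_deg s" "\<And>j. j < s \<Longrightarrow> w \<bullet> (mat_pow A j *v v1) = 0"
    using P_char[of s A v1] D unfolding r_def w_def by auto
  have dr: "degree r = s" "coeff r s = 1" using Pr(1) by (auto simp: monic_deg_def)
  have we: "w = (\<Sum>i\<le>s. coeff r i *\<^sub>R (mat_pow A i *v v1))"
    unfolding w_def by (rule poly_vec) (simp add: dr)
  have w0: "w \<noteq> 0"
  proof
    assume "w = 0"
    then have "kill A v1 s" unfolding kill_iff using Pr(1) w_def by force
    with D show False by auto
  qed
  have wV: "w \<in> V" unfolding we V_def
    by (intro span_sum span_scale invM[unfolded V_def] v1V[unfolded V_def])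
  define c where "c = v \<bullet> w"
  have "c = (\<Sum>i\<le>s. coeff r i * h i)"
    unfolding c_def we by (simp add: inner_sum_right vM)
  also have "\<dots> = h s"
    unfolding lessThan_Suc_atMost[symmetric] using h0 dr by simp
  finally have cpos: "c > 0" using hs by simp
  have vv: "v \<bullet> v = 1" using nv by (simp add: dot_square_norm)
  define z where "z = w - c *\<^sub>R v"
  have zV: "z \<in> V" unfolding z_def V_def
    using wV vV unfolding V_def by (intro span_diff span_scale) auto
  have zv: "z \<bullet> v = 0" unfolding z_def c_def
    by (simp add: inner_diff_left vv inner_commute[of w v])
  have zM: "z \<bullet> (mat_pow A j *v v1) = 0" if "j < s" for j
    using Pr(2)[OF that] vM[of j] h0[OF that] unfolding z_def by (simp add: inner_diff_left)
  obtain e where ze: "z = (\<Sum>i\<le>s. e i *\<^sub>R F i)" using span_rep[of z F "{..s}"] zV unfolding V_def by auto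
  have e0: "\<forall>i\<le>s. e i = 0"
  proof (rule ccontr)
    assume "\<not> (\<forall>i\<le>s. e i = 0)"
    then obtain i0 where i0: "i0 \<le> s" "e i0 \<noteq> 0" by auto
    define S where "S = {i. i \<le> s \<and> e i \<noteq> 0}"
    define d where "d = Max S"
    have fS: "finite S" unfolding S_def by auto
    have "i0 \<in> S" using i0 unfolding S_def by auto
    then have dS: "d \<in> S" and dmax: "\<And>i. i \<in> S \<Longrightarrow> i \<le> d"
      using fS unfolding d_def by (auto intro: Max_in)
    have ds: "d \<le> s" and ed: "e d \<noteq> 0" using dS unfolding S_def by auto
    have ez: "e i = 0" if "d < i" "i \<le> s" for i
      using dmax[of i] that unfolding S_def by force
    show False
    proof (cases "d = 0")
      case True
      have "z = (\<Sum>i\<le>s. (if i = 0 then e 0 *\<^sub>R v else 0))"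
        unfolding ze by (rule sum.cong) (use ez True in \<open>auto simp: F_def\<close>)
      also have "\<dots> = e 0 *\<^sub>R v" by (simp add: sum.delta)
      finally have "z \<bullet> v = e 0" by (simp add: vv)
      then show False using zv ed True by simp
    next
      case False
      define j where "j = s - d"
      have js: "j < s" using False ds unfolding j_def by simp
      have "0 = (mat_pow A j *v z) \<bullet> v1"
        using zM[OF js] mpv_sym[OF sym, of j z v1] by simp
      also have "\<dots> = (\<Sum>i\<le>s. e i * h (j + i))"
        unfolding ze by (simp add: vec.sum matrix_vector_mult_scaleR inner_sum_left F_def
            mpv_add[symmetric] h_def)
      also have "\<dots> = e d * h (j + d) + (\<Sum>i\<in>{..s} - {d}. e i * h (j + i))"
        using ds by (simp add: sum.remove)
      also have "(\<Sum>i\<in>{..s} - {d}. e i * h (j + i)) = 0"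
      proof (intro sum.neutral ballI)
        fix i assume "i \<in> {..s} - {d}"
        then have "i < d \<or> (d < i \<and> i \<le> s)" by auto
        then show "e i * h (j + i) = 0"
        proof
          assume "i < d" then have "j + i < s" using ds unfolding j_def by simp
          then show ?thesis by (simp add: h0)
        qed (simp add: ez)
      qed
      also have "j + d = s" using ds unfolding j_def by simp
      finally show False using ed hs by simp
    qed
  qed
  have "z = 0" unfolding ze using e0 by simp
  then have wc: "w = c *\<^sub>R v" unfolding z_def by simp
  have nw: "norm w = c" using wc nv cpos by simp
  have "stp A s v1 = (1 / norm w) *\<^sub>R w" unfolding stp_def w_def r_def by (simp add: Let_def)
  also have "\<dots> = v" using nw wc cpos by simp
  finally show ?thesis using st1 by simp
qed

theorem theorem4p1:
  fixes A :: "real^'n^'n" and v0 :: "real^'n" and s :: nat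
  assumes "transpose A = A"
    and "1 \<le> s" and "s < minpoly_deg A"
    and "norm v0 = 1"
    and "grade A v0 = s + 1"
  shows "\<forall>k. iter_v A s v0 (2 * k) = v0"
proof
  fix k
  show "iter_v A s v0 (2 * k) = v0"
  proof (induction k)
    case 0 then show ?case by simp
  next
    case (Suc k)
    have "iter_v A s v0 (2 * Suc k) = stp A s (stp A s (iter_v A s v0 (2 * k)))"
      by (simp only: mult_Suc_right add_2_eq_Suc iter_Suc)
    also have "\<dots> = v0" using Suc step_step[OF assms(1,4,5)] by simp
    finally show ?case .
  qed
qed

end
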